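(* Let $n\ge 2k\ge 4$. Let $\mathbb{S}$ be a $q$-covering design $\mathcal{C}_2(n-k+1,k,2)$ (a set of $k$-dimensional subspaces of $\mathbb{F}_2^{n-k+1}$ covering every $2$-dimensional subspace), let $U\subseteq\mathbb{F}_2^{n-k+1}$ be an $(n-k)$-dimensional subspace, and let $c=|\{X\in\mathbb{S}: X\subseteq U\}|$. Then $$\mathcal{C}_2(n,k,2)\le 2^{2(n-k)}+(2^k-1)|\mathbb{S}|-(2^k-2)c.$$
   Context: A $q$-covering design $\mathcal{C}_q(n,k,r)$ is a collection of $k$-dimensional subspaces of $\mathbb{F}_q^n$ such that every $r$-dimensional subspace of $\mathbb{F}_q^n$ is contained in at least one member; $\mathcal{C}_q(n,k,r)$ denotes the minimum size of such a collection. *)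

theory Defs
  imports Complex_Main "HOL-Library.Z2" "HOL-Library.Function_Algebras"
begin

text \<open>The field F_2 is the type bit. Vectors of F_2^m are modelled as functions
  nat => bit vanishing outside the coordinates 0..m-1.\<close>

definition scaleF :: "bit \<Rightarrow> (nat \<Rightarrow> bit) \<Rightarrow> (nat \<Rightarrow> bit)" where
  "scaleF c v = (\<lambda>i. c * v i)"

interpretation F2: vector_space scaleF
  by unfold_locales (auto simp: scaleF_def fun_eq_iff algebra_simps)

definition F2n :: "nat \<Rightarrow> (nat \<Rightarrow> bit) set" where
  "F2n m = {v. \<forall>i\<ge>m. v i = 0}"

definition subspace_of_dim :: "nat \<Rightarrow> nat \<Rightarrow> (nat \<Rightarrow> bit) set \<Rightarrow> bool" where
  "subspace_of_dim m k X \<longleftrightarrow> F2.subspace X \<and> X \<subseteq> F2n m \<and> F2.dim X = k"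

definition is_q_covering :: "nat \<Rightarrow> nat \<Rightarrow> nat \<Rightarrow> (nat \<Rightarrow> bit) set set \<Rightarrow> bool" where
  "is_q_covering m k r C \<longleftrightarrow> finite C \<and> (\<forall>X\<in>C. subspace_of_dim m k X) \<and>
     (\<forall>Y. subspace_of_dim m r Y \<longrightarrow> (\<exists>X\<in>C. Y \<subseteq> X))"

definition q_covering_number :: "nat \<Rightarrow> nat \<Rightarrow> nat \<Rightarrow> nat" where
  "q_covering_number m k r = (LEAST s. \<exists>C. is_q_covering m k r C \<and> card C = s)"

end

theory Submission
  imports Defs "HOL-Algebra.Algebraic_Closure_Type"
begin

no_notation var (\<open>X\<index>\<close>)

locale bvs = vector_space "s :: bit \<Rightarrow> 'b::ab_group_add \<Rightarrow> 'b" for s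
begin

lemma s0: "s 0 x = 0" by simp
lemma s1: "s 1 x = x" by simp

lemma span_insert_bit: "span (insert a B) = span B \<union> (\<lambda>x. a + x) ` span B"
proof -
  have "span (insert a B) = {x. \<exists>k. x - s k a \<in> span B}" by (rule span_insert)
  also have "\<dots> = span B \<union> (\<lambda>x. a + x) ` span B"
  proof (rule Set.set_eqI, rule iffI)
    fix x assume "x \<in> {x. \<exists>k. x - s k a \<in> span B}"
    then obtain k where k: "x - s k a \<in> span B" by blast
    show "x \<in> span B \<union> (\<lambda>x. a + x) ` span B"
    proof (cases "k = 0")
      case True with k show ?thesis by simp
    next
      case False hence "k = 1" by simp
      with k have "x - a \<in> span B" by simp
      hence "a + (x - a) \<in> (\<lambda>x. a + x) ` span B" by blast
      thus ?thesis by simp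
    qed
  next
    fix x assume "x \<in> span B \<union> (\<lambda>x. a + x) ` span B"
    then show "x \<in> {x. \<exists>k. x - s k a \<in> span B}"
    proof
      assume "x \<in> span B" thus ?thesis by (intro CollectI exI[of _ 0]) simp
    next
      assume "x \<in> (\<lambda>x. a + x) ` span B"
      then obtain y where "y \<in> span B" "x = a + y" by blast
      thus ?thesis by (intro CollectI exI[of _ 1]) simp
    qed
  qed
  finally show ?thesis .
qed

lemma card_span_indep: "finite B \<Longrightarrow> independent B \<Longrightarrow> finite (span B) \<and> card (span B) = 2 ^ card B"
proof (induction B rule: finite_induct)
  case empty then show ?case by simp
next
  case (insert a B)
  have ind: "independent B" and a: "a \<notin> span B"
    using insert.prems insert.hyps(2) by (auto simp: independent_insert)
  from insert.IH[OF ind] have fin: "finite (span B)" and c: "card (span B) = 2 ^ card B" by auto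
  have disj: "span B \<inter> (\<lambda>x. a + x) ` span B = {}"
  proof (rule ccontr)
    assume "span B \<inter> (\<lambda>x. a + x) ` span B \<noteq> {}"
    then obtain y where y: "y \<in> span B" "a + y \<in> span B" by blast
    hence "(a + y) - y \<in> span B" by (intro span_diff)
    with a show False by simp
  qed
  have inj: "inj_on (\<lambda>x. a + x) (span B)" by (auto simp: inj_on_def)
  have "card (span (insert a B)) = card (span B) + card ((\<lambda>x. a + x) ` span B)"
    unfolding span_insert_bit using fin disj by (intro card_Un_disjoint) auto
  also have "\<dots> = 2 * 2 ^ card B" using card_image[OF inj] c by simp
  finally show ?case using fin insert.hyps by (simp add: span_insert_bit)
qed

lemma card_subspace: assumes "subspace V" "finite V" shows "card V = 2 ^ dim V"
proof -
  obtain B where B: "B \<subseteq> V" "independent B" "V \<subseteq> span B" "card B = dim V"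
    by (rule basis_exists)
  have fB: "finite B" using B(1) assms(2) finite_subset by blast
  have "span B = V" using B span_minimal[OF B(1) assms(1)] by blast
  with card_span_indep[OF fB B(2)] B(4) show ?thesis by simp
qed

lemma dim_by_card: assumes "subspace V" "finite V" "card V = 2 ^ d" shows "dim V = d"
  using card_subspace[OF assms(1,2)] assms(3) by simp

end

interpretation F2b: bvs scaleF ..

lemma bit_add_self [simp]: "(x::bit) + x = 0"
  by (cases x) auto

lemma fun_add_self [simp]: "(v::nat \<Rightarrow> bit) + v = 0"
  by (simp add: fun_eq_iff)

lemma scaleF_cases: "scaleF c v = 0 \<or> scaleF c v = v"
  by (cases c) (auto simp: scaleF_def fun_eq_iff)

lemma F2_subspace_iff: "F2.subspace S \<longleftrightarrow> 0 \<in> S \<and> (\<forall>x\<in>S. \<forall>y\<in>S. x + y \<in> S)"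
  unfolding F2.subspace_def using scaleF_cases by metis

lemma F2n_Suc: "F2n (Suc m) = F2n m \<union> (\<lambda>v. v(m := 1)) ` F2n m"
proof (rule Set.set_eqI, rule iffI)
  fix v assume v: "v \<in> F2n (Suc m)"
  show "v \<in> F2n m \<union> (\<lambda>v. v(m := 1)) ` F2n m"
  proof (cases "v m = 0")
    case True
    have "v \<in> F2n m" unfolding F2n_def
    proof (intro CollectI allI impI)
      fix i assume "m \<le> i"
      show "v i = 0"
      proof (cases "i = m")
        case True thus ?thesis using \<open>v m = 0\<close> by simp
      next
        case False hence "Suc m \<le> i" using \<open>m \<le> i\<close> by simp
        thus ?thesis using v by (simp add: F2n_def)
      qed
    qed
    thus ?thesis by simp
  next
    case False
    hence "v m = 1" by simp
    have "v(m := 0) \<in> F2n m" using v by (auto simp: F2n_def)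
    moreover have "v = (v(m := 0))(m := 1)" using \<open>v m = 1\<close> by (auto simp: fun_eq_iff)
    ultimately show ?thesis by blast
  qed
next
  fix v assume "v \<in> F2n m \<union> (\<lambda>v. v(m := 1)) ` F2n m"
  thus "v \<in> F2n (Suc m)" by (auto simp: F2n_def)
qed

lemma F2n_card: "finite (F2n m) \<and> card (F2n m) = 2 ^ m"
proof (induction m)
  case 0
  have "F2n 0 = {0}" by (auto simp: F2n_def fun_eq_iff)
  thus ?case by simp
next
  case (Suc m)
  have disj: "F2n m \<inter> (\<lambda>v. v(m := 1)) ` F2n m = {}" by (auto simp: F2n_def)
  have inj: "inj_on (\<lambda>v. v(m := 1)) (F2n m)"
  proof (rule inj_onI)
    fix v w assume vw: "v \<in> F2n m" "w \<in> F2n m" "v(m := 1) = w(m := 1)"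
    show "v = w"
    proof
      fix i show "v i = w i"
      proof (cases "i = m")
        case True thus ?thesis using vw(1,2) by (simp add: F2n_def)
      next
        case False thus ?thesis using fun_cong[OF vw(3), of i] by simp
      qed
    qed
  qed
  show ?case unfolding F2n_Suc using Suc disj card_image[OF inj]
    by (simp add: card_Un_disjoint)
qed

lemma F2n_finite [simp]: "finite (F2n m)" using F2n_card by blast

lemma F2n_subspace: "F2.subspace (F2n m)"
  unfolding F2_subspace_iff F2n_def by auto

lemma F2n_mono: "a \<le> b \<Longrightarrow> F2n a \<subseteq> F2n b"
  unfolding F2n_def by auto

lemma dim_F2n: "F2.dim (F2n m) = m"
  using F2b.dim_by_card[OF F2n_subspace F2n_finite] F2n_card by blast

lemma subspace_of_dim_card:
  "subspace_of_dim m d V \<longleftrightarrow> F2.subspace V \<and> V \<subseteq> F2n m \<and> card V = 2 ^ d"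
proof -
  have "F2.subspace V \<Longrightarrow> V \<subseteq> F2n m \<Longrightarrow> card V = 2 ^ F2.dim V"
    by (rule F2b.card_subspace) (auto intro: finite_subset)
  moreover have "F2.subspace V \<Longrightarrow> V \<subseteq> F2n m \<Longrightarrow> card V = 2 ^ d \<Longrightarrow> F2.dim V = d"
    by (rule F2b.dim_by_card) (auto intro: finite_subset)
  ultimately show ?thesis unfolding subspace_of_dim_def by auto
qed

definition sh :: "nat \<Rightarrow> (nat \<Rightarrow> bit) \<Rightarrow> (nat \<Rightarrow> bit)" where
  "sh k w = (\<lambda>i. if k \<le> i then w (i - k) else 0)"
definition unsh :: "nat \<Rightarrow> (nat \<Rightarrow> bit) \<Rightarrow> (nat \<Rightarrow> bit)" where
  "unsh k y = (\<lambda>i. y (i + k))"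
definition prP :: "nat \<Rightarrow> (nat \<Rightarrow> bit) \<Rightarrow> (nat \<Rightarrow> bit)" where
  "prP k y = (\<lambda>i. if i < k then y i else 0)"

lemma sh_add: "sh k (a + b) = sh k a + sh k b" by (auto simp: sh_def fun_eq_iff)
lemma sh_0 [simp]: "sh k 0 = 0" by (auto simp: sh_def fun_eq_iff)
lemma sh_inj: "sh k a = sh k b \<Longrightarrow> a = b"
  unfolding sh_def fun_eq_iff by (metis add_diff_cancel_right' le_add2)
lemma prP_add: "prP k (a + b) = prP k a + prP k b" by (auto simp: prP_def fun_eq_iff)
lemma prP_sh [simp]: "prP k (sh k w) = 0" by (auto simp: prP_def sh_def fun_eq_iff)
lemma prP_F2n: "p \<in> F2n k \<Longrightarrow> prP k p = p" by (auto simp: prP_def F2n_def fun_eq_iff)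
lemma prP_in: "prP k y \<in> F2n k" by (auto simp: prP_def F2n_def)
lemma unsh_in: "y \<in> F2n (k + m) \<Longrightarrow> unsh k y \<in> F2n m" by (auto simp: unsh_def F2n_def)
lemma decomp: "y = prP k y + sh k (unsh k y)"
  by (auto simp: prP_def sh_def unsh_def fun_eq_iff)
lemma unsh_sh_add: "p \<in> F2n k \<Longrightarrow> unsh k (p + sh k w) = w"
  by (auto simp: unsh_def sh_def F2n_def fun_eq_iff)
lemma prP_sh_add: "p \<in> F2n k \<Longrightarrow> prP k (p + sh k w) = p"
  by (simp add: prP_add prP_F2n)
lemma sh_add_in: "p \<in> F2n k \<Longrightarrow> w \<in> F2n m \<Longrightarrow> p + sh k w \<in> F2n (k + m)"
  by (auto simp: sh_def F2n_def)

type_synonym L = "bit alg_closure"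

definition scaleL :: "bit \<Rightarrow> L \<Rightarrow> L" where "scaleL c x = to_ac c * x"

interpretation FL: vector_space scaleL
proof
  fix a :: bit and x y :: L show "scaleL a (x + y) = scaleL a x + scaleL a y"
    by (simp add: scaleL_def distrib_left)
next
  fix a b :: bit and x :: L show "scaleL (a + b) x = scaleL a x + scaleL b x"
    unfolding scaleL_def to_ac_add by (rule distrib_right)
next
  fix a b :: bit and x :: L show "scaleL a (scaleL b x) = scaleL (a * b) x"
    unfolding scaleL_def to_ac_mult by (simp add: mult.assoc)
next
  fix x :: L show "scaleL 1 x = x" by (simp add: scaleL_def)
qed

interpretation FLb: bvs scaleL ..

interpretation PFL: vector_space_pair scaleF scaleL ..
interpretation PFF: vector_space_pair scaleF scaleF ..

lemma L_two [simp]: "(2::L) = 0"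
  by (metis bit_2_eq_0 to_ac_0 to_ac_numeral)

lemma L_add_self [simp]: "(x::L) + x = 0"
  by (metis L_two mult_2 mult_zero_left)

lemma L_sq_add: "((x::L) + y) ^ 2 = x ^ 2 + y ^ 2"
proof -
  have "(x + y) ^ 2 = x^2 + y^2 + 2 * x * y" by (simp add: power2_eq_square algebra_simps)
  thus ?thesis by simp
qed

lemma L_frob: "((x::L) + y) ^ (2 ^ j) = x ^ (2 ^ j) + y ^ (2 ^ j)"
proof (induction j)
  case 0 thus ?case by simp
next
  case (Suc j)
  have "(x + y) ^ (2 ^ Suc j) = ((x + y) ^ (2 ^ j)) ^ 2" by (simp add: power_mult[symmetric] mult.commute)
  also have "\<dots> = (x ^ (2 ^ j)) ^ 2 + (y ^ (2 ^ j)) ^ 2" using Suc L_sq_add by simp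
  also have "\<dots> = x ^ (2 ^ Suc j) + y ^ (2 ^ Suc j)" by (simp add: power_mult[symmetric] mult.commute)
  finally show ?case .
qed

definition Kset :: "nat \<Rightarrow> L set" where "Kset m = {x. x ^ (2 ^ m) = x}"

lemma K_0: "0 \<in> Kset m" by (simp add: Kset_def)
lemma K_add: "x \<in> Kset m \<Longrightarrow> y \<in> Kset m \<Longrightarrow> x + y \<in> Kset m"
  by (simp add: Kset_def L_frob)
lemma K_mult: "x \<in> Kset m \<Longrightarrow> y \<in> Kset m \<Longrightarrow> x * y \<in> Kset m"
  by (simp add: Kset_def power_mult_distrib)

lemma to_ac_cases: "to_ac (c::bit) = 0 \<or> to_ac c = 1"
  by (cases c) auto

lemma K_subspace: "FL.subspace (Kset m)"
  unfolding FL.subspace_def scaleL_def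
  using K_0 K_add K_mult to_ac_cases by (metis mult_zero_left mult_1)

definition Pm :: "nat \<Rightarrow> L poly" where "Pm m = monom 1 (2 ^ m) - [:0, 1:]"

lemma Pm_roots: "poly (Pm m) x = 0 \<longleftrightarrow> x \<in> Kset m"
  by (simp add: Pm_def Kset_def poly_monom)

lemma Pm_degree: assumes "m \<ge> 1" shows "degree (Pm m) = 2 ^ m"
proof -
  have "(2::nat) ^ m \<ge> 2 ^ 1" using assms by (intro power_increasing) auto
  hence gt: "(2::nat) ^ m > 1" by simp
  have "degree ([:0, 1:] :: L poly) < degree (monom (1::L) (2 ^ m))"
    using gt by (simp add: degree_monom_eq)
  hence "degree (monom (1::L) (2 ^ m) + - [:0, 1:]) = degree (monom (1::L) (2 ^ m))"
    by (intro degree_add_eq_left) (simp only: degree_minus)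
  thus ?thesis unfolding Pm_def diff_conv_add_uminus by (simp add: degree_monom_eq)
qed

lemma Pm_nonzero: "m \<ge> 1 \<Longrightarrow> Pm m \<noteq> 0"
  using Pm_degree by (metis degree_0 power_not_zero zero_neq_numeral)

lemma of_nat_pow2_L: "m \<ge> 1 \<Longrightarrow> (of_nat (2 ^ m) :: L) = 0"
  by (cases m) auto

lemma Pm_pderiv: "m \<ge> 1 \<Longrightarrow> pderiv (Pm m) = - 1"
  by (cases m) (simp_all add: Pm_def pderiv_monom pderiv_diff pderiv_pCons one_pCons)

lemma Pm_no_double: assumes "m \<ge> 1" shows "\<not> [:-x, 1:] ^ 2 dvd Pm m"
proof
  assume "[:-x, 1:] ^ 2 dvd Pm m"
  then obtain h where h: "Pm m = [:-x, 1:] ^ 2 * h" by (elim dvdE)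
  let ?q = "[:-x, 1:] :: L poly"
  have "poly (pderiv (Pm m)) x = 0"
    unfolding h power2_eq_square pderiv_mult poly_add poly_mult by simp
  moreover have "pderiv (Pm m) = -1" using assms by (rule Pm_pderiv)
  ultimately show False by simp
qed

lemma card_K: assumes "m \<ge> 1" shows "finite (Kset m) \<and> card (Kset m) = 2 ^ m"
proof -
  let ?P = "Pm m"
  have P0: "?P \<noteq> 0" using Pm_nonzero[OF assms] .
  obtain A where A: "size A = degree ?P" "?P = smult (lead_coeff ?P) (\<Prod>x\<in>#A. [:-x, 1:])"
    using alg_closed_imp_factorization[OF P0] by blast
  define c where "c = lead_coeff ?P"
  have lc: "c \<noteq> 0" using P0 by (simp add: c_def)
  have A2: "?P = smult c (\<Prod>x\<in>#A. [:-x, 1:])" using A(2) by (simp only: c_def)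
  have roots: "x \<in> Kset m \<longleftrightarrow> x \<in># A" for x
  proof -
    have "poly ?P x = c * (\<Prod>a\<in>#A. poly [:-a, 1:] x)"
      by (simp only: A2 poly_smult poly_prod_mset)
    also have "(\<Prod>a\<in>#A. poly [:-a, 1:] x) = (\<Prod>a\<in>#A. x - a)" by simp
    finally have "poly ?P x = c * (\<Prod>a\<in>#A. x - a)" .
    hence "poly ?P x = 0 \<longleftrightarrow> (\<Prod>a\<in>#A. x - a) = 0" using lc by simp
    also have "\<dots> \<longleftrightarrow> x \<in># A" by (auto simp: prod_mset_zero_iff image_iff)
    finally show ?thesis using Pm_roots by simp
  qed
  have cnt: "count A x \<le> 1" for x
  proof (rule ccontr)
    assume "\<not> count A x \<le> 1"
    hence "x \<in># A" by (simp add: count_greater_zero_iff[symmetric] del: count_greater_zero_iff)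
    then obtain B where B: "A = add_mset x B" by (metis multi_member_split)
    hence "x \<in># B" using \<open>\<not> count A x \<le> 1\<close> by (simp add: count_greater_zero_iff[symmetric] del: count_greater_zero_iff)
    then obtain C where C: "B = add_mset x C" by (metis multi_member_split)
    have "[:-x, 1:] ^ 2 dvd (\<Prod>y\<in>#A. [:-y, 1:])"
      unfolding B C image_mset_add_mset prod_mset.add_mset power2_eq_square
      unfolding mult.assoc[symmetric] by (rule dvd_triv_left)
    hence dv: "[:-x, 1:] ^ 2 dvd ?P" unfolding A2 by (rule dvd_smult)
    with Pm_no_double[OF assms] show False by blast
  qed
  have KA: "Kset m = set_mset A" using roots by blast
  have "mset_set (set_mset A) = A"
  proof (rule multiset_eqI)
    fix x show "count (mset_set (set_mset A)) x = count A x"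
    proof (cases "x \<in># A")
      case True
      hence "count A x \<ge> 1" by (simp add: Suc_le_eq)
      with cnt[of x] have "count A x = 1" by linarith
      thus ?thesis using True by simp
    next
      case False thus ?thesis by (simp add: not_in_iff)
    qed
  qed
  hence "size (mset_set (set_mset A)) = size A" by (rule arg_cong)
  hence "card (set_mset A) = size A" by (simp only: size_mset_set)
  thus ?thesis using KA A(1) Pm_degree[OF assms] by simp
qed

lemma dim_K: "m \<ge> 1 \<Longrightarrow> FL.dim (Kset m) = m"
  using FLb.dim_by_card[OF K_subspace] card_K by blast

context vector_space_pair begin
lemma fin_subspace_iso:
  assumes "vs1.subspace S" "vs2.subspace T" "finite S" "finite T" "vs1.dim S = vs2.dim T"
  shows "\<exists>f. Vector_Spaces.linear s1 s2 f \<and> f ` S = T \<and> inj_on f S"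
proof -
  obtain B where B: "B \<subseteq> S" "vs1.independent B" "S \<subseteq> vs1.span B" "card B = vs1.dim S"
    by (rule vs1.basis_exists)
  obtain C where C: "C \<subseteq> T" "vs2.independent C" "T \<subseteq> vs2.span C" "card C = vs2.dim T"
    by (rule vs2.basis_exists)
  have fB: "finite B" using B(1) assms(3) finite_subset by blast
  have fC: "finite C" using C(1) assms(4) finite_subset by blast
  from finite_basis_to_basis_subspace_isomorphism[OF assms(1,2,5) fB B fC C]
  show ?thesis by blast
qed
end

lemma f_cancel1 [simp]: "(a::nat\<Rightarrow>bit) + (a + b) = b"
  by (simp add: add.assoc[symmetric])
lemma f_cancel2 [simp]: "(a::nat\<Rightarrow>bit) + b + b = a"
  by (simp add: add.assoc)
lemma f_cancel3 [simp]: "(a::nat\<Rightarrow>bit) + b + a = b"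
  by (metis add.commute f_cancel2)
lemma f_cancel4 [simp]: "(b::nat\<Rightarrow>bit) + (a + b) = a"
  by (metis add.commute f_cancel1)
lemma f_add_eq0: "(a::nat\<Rightarrow>bit) + b = 0 \<longleftrightarrow> a = b"
  by (metis f_cancel2 fun_add_self add_0)
lemma f_add_eq_left: "(a::nat\<Rightarrow>bit) + b = a \<longleftrightarrow> b = 0"
  by (metis f_cancel1 fun_add_self add.right_neutral)
lemma f_add_eq_right: "(a::nat\<Rightarrow>bit) + b = b \<longleftrightarrow> a = 0"
  by (metis add.commute f_add_eq_left)

lemma quad_subspace: "F2.subspace {0, a, b, a + (b::nat\<Rightarrow>bit)}"
  unfolding F2_subspace_iff by (auto simp: add.commute)

lemma quad_card: assumes "(a::nat\<Rightarrow>bit) \<noteq> 0" "b \<noteq> 0" "a \<noteq> b" shows "card {0, a, b, a + b} = 4"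
proof -
  have "a + b \<noteq> 0" "a + b \<noteq> a" "a + b \<noteq> b"
    using assms f_add_eq0 f_add_eq_left f_add_eq_right by auto
  thus ?thesis using assms by auto
qed

lemma two_dim:
  assumes "F2.subspace Y" "finite Y" "card Y = 4"
  shows "\<exists>y1 y2. y1 \<in> Y \<and> y2 \<in> Y \<and> y1 \<noteq> 0 \<and> y2 \<noteq> 0 \<and> y1 \<noteq> y2 \<and> Y = {0, y1, y2, y1 + y2}"
proof -
  have "card (Y - {0}) = 3" using assms F2_subspace_iff by (simp add: card_Diff_singleton)
  then obtain y1 where y1: "y1 \<in> Y" "y1 \<noteq> 0" by (metis Diff_iff card_0_eq empty_iff finite_Diff assms(2) singletonI zero_neq_numeral ex_in_conv)
  have "card (Y - {0, y1}) = 2" using assms F2_subspace_iff y1 by (simp add: card_Diff_subset)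
  then obtain y2 where y2: "y2 \<in> Y" "y2 \<noteq> 0" "y2 \<noteq> y1"
    by (metis Diff_iff card_0_eq empty_iff finite_Diff assms(2) insertCI zero_neq_numeral ex_in_conv)
  have sub: "{0, y1, y2, y1 + y2} \<subseteq> Y" using y1 y2 assms(1) F2_subspace_iff by auto
  have "card {0, y1, y2, y1 + y2} = card Y" using quad_card y1 y2 assms(3) by auto
  hence "{0, y1, y2, y1 + y2} = Y" using card_subset_eq[OF assms(2) sub] by blast
  thus ?thesis using y1 y2 by blast
qed

locale constr =
  fixes k m :: nat and U :: "(nat \<Rightarrow> bit) set" and u0 :: "nat \<Rightarrow> bit"
    and \<psi> :: "(nat \<Rightarrow> bit) \<Rightarrow> (nat \<Rightarrow> bit)" and \<theta> :: "(nat \<Rightarrow> bit) \<Rightarrow> L"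
  assumes k2: "2 \<le> k" and km: "k \<le> m"
    and U_sub: "F2.subspace U" and U_in: "U \<subseteq> F2n (Suc m)" and U_card: "card U = 2 ^ m"
    and u0_in: "u0 \<in> F2n (Suc m)" and u0_nU: "u0 \<notin> U"
    and \<psi>_lin: "Vector_Spaces.linear scaleF scaleF \<psi>" and \<psi>_img: "\<psi> ` U = F2n m" and \<psi>_inj: "inj_on \<psi> U"
    and \<theta>_lin: "Vector_Spaces.linear scaleF scaleL \<theta>" and \<theta>_img: "\<theta> ` F2n m = Kset m"
    and \<theta>_inj: "inj_on \<theta> (F2n m)"
begin

lemma \<psi>_add: "\<psi> (x + y) = \<psi> x + \<psi> y" using PFF.linear_add[OF \<psi>_lin] .
lemma \<psi>_0 [simp]: "\<psi> 0 = 0" using PFF.linear_0[OF \<psi>_lin] .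
lemma \<theta>_add: "\<theta> (x + y) = \<theta> x + \<theta> y" using PFL.linear_add[OF \<theta>_lin] .
lemma \<theta>_0 [simp]: "\<theta> 0 = 0" using PFL.linear_0[OF \<theta>_lin] .

lemma U0: "0 \<in> U" using U_sub F2_subspace_iff by blast
lemma U_add: "x \<in> U \<Longrightarrow> y \<in> U \<Longrightarrow> x + y \<in> U" using U_sub F2_subspace_iff by blast

lemma finU: "finite U" using U_in finite_subset F2n_finite by blast

lemma hyperplane: assumes "x \<in> F2n (Suc m)" "y \<in> F2n (Suc m)" "x \<notin> U" "y \<notin> U" shows "x + y \<in> U"
proof -
  have disj: "U \<inter> (\<lambda>u. x + u) ` U = {}"
  proof (rule ccontr)
    assume "U \<inter> (\<lambda>u. x + u) ` U \<noteq> {}"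
    then obtain u where "u \<in> U" "x + u \<in> U" by blast
    hence "x + u + u \<in> U" using U_add by blast
    with assms(3) show False by simp
  qed
  have inj: "inj_on (\<lambda>u. x + u) U" by (auto simp: inj_on_def)
  have sub: "U \<union> (\<lambda>u. x + u) ` U \<subseteq> F2n (Suc m)"
  proof -
    have "x + u \<in> F2n (Suc m)" if "u \<in> U" for u
      using that U_in assms(1) F2n_subspace[of "Suc m"] F2_subspace_iff by blast
    thus ?thesis using U_in by blast
  qed
  have "card (U \<union> (\<lambda>u. x + u) ` U) = 2 ^ m + 2 ^ m"
    using card_Un_disjoint[OF finU _ disj] finU card_image[OF inj] U_card by simp
  also have "\<dots> = card (F2n (Suc m))" using F2n_card by simp
  finally have "U \<union> (\<lambda>u. x + u) ` U = F2n (Suc m)"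
    using card_subset_eq[OF F2n_finite sub] by simp
  with assms(2,4) obtain u where "u \<in> U" "y = x + u" by blast
  thus ?thesis by simp
qed

definition xU :: "(nat \<Rightarrow> bit) \<Rightarrow> (nat \<Rightarrow> bit)" where
  "xU x = (if x \<in> U then x else x + u0)"

lemma xU_in: "x \<in> F2n (Suc m) \<Longrightarrow> xU x \<in> U"
  using hyperplane[of x u0] u0_in u0_nU by (auto simp: xU_def)

definition Tm :: "(nat \<Rightarrow> bit) \<Rightarrow> (nat \<Rightarrow> bit) \<Rightarrow> (nat \<Rightarrow> bit)" where
  "Tm p x = (if x \<in> U then 0 else p) + sh k (\<psi> (xU x))"

lemma Tm_0 [simp]: "Tm p 0 = 0" by (simp add: Tm_def xU_def U0)

lemma notU_add: "x \<in> U \<Longrightarrow> y \<notin> U \<Longrightarrow> x + y \<notin> U"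
  using U_add[of x "x + y"] by auto

lemma Tm_add: assumes "x \<in> F2n (Suc m)" "y \<in> F2n (Suc m)" shows "Tm p (x + y) = Tm p x + Tm p y"
proof (cases "x \<in> U"; cases "y \<in> U")
  assume xy: "x \<in> U" "y \<in> U"
  hence "x + y \<in> U" by (rule U_add)
  thus ?thesis using xy by (simp add: Tm_def xU_def \<psi>_add sh_add)
next
  assume xy: "x \<in> U" "y \<notin> U"
  hence "x + y \<notin> U" by (rule notU_add)
  thus ?thesis using xy by (simp add: Tm_def xU_def \<psi>_add sh_add add_ac)
next
  assume xy: "x \<notin> U" "y \<in> U"
  hence "y + x \<notin> U" by (intro notU_add)
  hence "x + y \<notin> U" by (simp add: add.commute)
  thus ?thesis using xy by (simp add: Tm_def xU_def \<psi>_add sh_add add_ac)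
next
  assume xy: "x \<notin> U" "y \<notin> U"
  hence xyU: "x + y \<in> U" using hyperplane assms by blast
  have e: "x + u0 + (y + u0) = x + y" by (simp add: add_ac)
  have "Tm p x + Tm p y = (p + p) + sh k (\<psi> (x + u0) + \<psi> (y + u0))"
    using xy by (simp add: Tm_def xU_def sh_add add_ac)
  also have "\<dots> = sh k (\<psi> (x + y))" by (simp add: \<psi>_add[symmetric] e)
  finally show ?thesis using xyU by (simp add: Tm_def xU_def)
qed

lemma Tm_in: assumes "p \<in> F2n k" "x \<in> F2n (Suc m)" shows "Tm p x \<in> F2n (k + m)"
proof -
  have "(if x \<in> U then 0 else p) \<in> F2n k" using assms(1) by (auto simp: F2n_def)
  moreover have "\<psi> (xU x) \<in> F2n m" using xU_in[OF assms(2)] \<psi>_img by blast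
  ultimately show ?thesis unfolding Tm_def by (rule sh_add_in)
qed

lemma Tm_inj: assumes "p \<in> F2n k" "p \<noteq> 0" shows "inj_on (Tm p) (F2n (Suc m))"
proof (rule inj_onI)
  fix x y assume x: "x \<in> F2n (Suc m)" and y: "y \<in> F2n (Suc m)" and e: "Tm p x = Tm p y"
  have in0: "(if z \<in> U then 0 else p) \<in> F2n k" for z using assms(1) by (auto simp: F2n_def)
  have "prP k (Tm p x) = prP k (Tm p y)" using e by simp
  hence pe: "(if x \<in> U then 0 else p) = (if y \<in> U then 0 else p)"
    unfolding Tm_def using prP_sh_add[OF in0] by simp
  hence xy: "x \<in> U \<longleftrightarrow> y \<in> U" using assms(2) by (auto split: if_splits)
  have "unsh k (Tm p x) = unsh k (Tm p y)" using e by simp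
  hence "\<psi> (xU x) = \<psi> (xU y)" unfolding Tm_def using unsh_sh_add[OF in0] by simp
  hence "xU x = xU y" using \<psi>_inj xU_in[OF x] xU_in[OF y] by (auto simp: inj_on_def)
  thus "x = y" using xy by (auto simp: xU_def split: if_splits)
qed

lemma Tm_U: "x \<in> U \<Longrightarrow> Tm p x = sh k (\<psi> x)" by (simp add: Tm_def xU_def)

lemma Tm_surj: assumes "p \<in> F2n k" "y \<in> F2n (k + m)" "prP k y = 0 \<or> prP k y = p"
  shows "\<exists>x \<in> F2n (Suc m). Tm p x = y"
proof -
  have "unsh k y \<in> F2n m" using assms(2) by (rule unsh_in)
  then obtain u where u: "u \<in> U" "\<psi> u = unsh k y" using \<psi>_img by force
  have uF: "u \<in> F2n (Suc m)" using u U_in by blast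
  show ?thesis
  proof (cases "prP k y = 0")
    case True
    have "Tm p u = sh k (unsh k y)" using u by (simp add: Tm_U)
    also have "\<dots> = y" using decomp[of y k] True by simp
    finally show ?thesis using uF by blast
  next
    case False
    hence py: "prP k y = p" using assms(3) by blast
    have nU: "u + u0 \<notin> U" using notU_add[OF u(1) u0_nU] .
    have inF: "u + u0 \<in> F2n (Suc m)" using uF u0_in F2n_subspace F2_subspace_iff by blast
    have "Tm p (u + u0) = p + sh k (\<psi> u)" using nU by (simp add: Tm_def xU_def add.assoc)
    also have "\<dots> = y" using decomp[of y k] py u by simp
    finally show ?thesis using inF by blast
  qed
qed

lemma Tm_image_dim: assumes "p \<in> F2n k" "p \<noteq> 0" "subspace_of_dim (Suc m) k V"
  shows "subspace_of_dim (k + m) k (Tm p ` V)"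
proof -
  have V: "F2.subspace V" "V \<subseteq> F2n (Suc m)" "card V = 2 ^ k"
    using assms(3) subspace_of_dim_card by auto
  have "F2.subspace (Tm p ` V)"
    unfolding F2_subspace_iff
  proof (intro conjI ballI)
    show "0 \<in> Tm p ` V" using V(1) F2_subspace_iff Tm_0 by (metis image_eqI)
  next
    fix a b assume "a \<in> Tm p ` V" "b \<in> Tm p ` V"
    then obtain x y where xy: "x \<in> V" "y \<in> V" "a = Tm p x" "b = Tm p y" by blast
    have "Tm p (x + y) = Tm p x + Tm p y" using xy V(2) by (intro Tm_add) auto
    hence "a + b = Tm p (x + y)" using xy by simp
    moreover have "x + y \<in> V" using xy V(1) F2_subspace_iff by blast
    ultimately show "a + b \<in> Tm p ` V" by blast
  qed
  moreover have "Tm p ` V \<subseteq> F2n (k + m)" using V(2) Tm_in[OF assms(1)] by blast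
  moreover have "card (Tm p ` V) = 2 ^ k"
    using card_image[OF inj_on_subset[OF Tm_inj[OF assms(1,2)] V(2)]] V(3) by simp
  ultimately show ?thesis using subspace_of_dim_card by blast
qed

end

lemma L_inj2:
  fixes g1 g2 a b a' b' :: L
  assumes "g1 \<noteq> 0" "g2 \<noteq> 0" "g1 \<noteq> g2"
    and e1: "a * g1 + b * g1 ^ 2 = a' * g1 + b' * g1 ^ 2"
    and e2: "a * g2 + b * g2 ^ 2 = a' * g2 + b' * g2 ^ 2"
  shows "a = a' \<and> b = b'"
proof -
  have "(a - a' + (b - b') * g1) * g1 = 0" using e1 by (simp add: algebra_simps power2_eq_square)
  hence h1: "a - a' + (b - b') * g1 = 0" using assms(1) by simp
  have "(a - a' + (b - b') * g2) * g2 = 0" using e2 by (simp add: algebra_simps power2_eq_square)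
  hence h2: "a - a' + (b - b') * g2 = 0" using assms(2) by simp
  have "(b - b') * (g1 - g2) = (a - a' + (b - b') * g1) - (a - a' + (b - b') * g2)"
    by (simp add: algebra_simps)
  also have "\<dots> = 0" by (simp only: h1 h2 diff_self)
  finally have "(b - b') * (g1 - g2) = 0" .
  hence "b = b'" using assms(3) by simp
  with h1 show ?thesis by simp
qed

context constr begin

definition ginv :: "L \<Rightarrow> (nat \<Rightarrow> bit)" where "ginv = inv_into (F2n m) \<theta>"

lemma ginv_in: "z \<in> Kset m \<Longrightarrow> ginv z \<in> F2n m"
  unfolding ginv_def using \<theta>_img by (metis inv_into_into)
lemma \<theta>_ginv: "z \<in> Kset m \<Longrightarrow> \<theta> (ginv z) = z"
  unfolding ginv_def using \<theta>_img by (metis f_inv_into_f)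
lemma ginv_\<theta>: "w \<in> F2n m \<Longrightarrow> ginv (\<theta> w) = w"
  unfolding ginv_def using \<theta>_inj by (rule inv_into_f_f)
lemma \<theta>_in: "w \<in> F2n m \<Longrightarrow> \<theta> w \<in> Kset m" using \<theta>_img by blast
lemma ginv_0 [simp]: "ginv 0 = 0"
  using ginv_\<theta>[of 0] by (simp add: F2n_def)
lemma ginv_add: assumes "z1 \<in> Kset m" "z2 \<in> Kset m" shows "ginv (z1 + z2) = ginv z1 + ginv z2"
proof -
  have "ginv z1 + ginv z2 \<in> F2n m"
    using ginv_in assms F2n_subspace F2_subspace_iff by blast
  moreover have "\<theta> (ginv z1 + ginv z2) = z1 + z2" using assms by (simp add: \<theta>_add \<theta>_ginv)
  ultimately show ?thesis using ginv_\<theta> by metis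
qed

lemma kF: "F2n k \<subseteq> F2n m" using km by (rule F2n_mono)

definition Am :: "L \<Rightarrow> L \<Rightarrow> (nat \<Rightarrow> bit) \<Rightarrow> (nat \<Rightarrow> bit)" where
  "Am a b p = ginv (a * \<theta> p + b * (\<theta> p) ^ 2)"

definition Gr :: "L \<Rightarrow> L \<Rightarrow> (nat \<Rightarrow> bit) set" where
  "Gr a b = (\<lambda>p. p + sh k (Am a b p)) ` F2n k"

lemma expr_in: "a \<in> Kset m \<Longrightarrow> b \<in> Kset m \<Longrightarrow> g \<in> Kset m \<Longrightarrow> a * g + b * g ^ 2 \<in> Kset m"
  by (simp add: K_add K_mult power2_eq_square)

lemma Am_in: "a \<in> Kset m \<Longrightarrow> b \<in> Kset m \<Longrightarrow> p \<in> F2n m \<Longrightarrow> Am a b p \<in> F2n m"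
  unfolding Am_def by (intro ginv_in expr_in \<theta>_in)

lemma Am_add: assumes "a \<in> Kset m" "b \<in> Kset m" "p1 \<in> F2n m" "p2 \<in> F2n m"
  shows "Am a b (p1 + p2) = Am a b p1 + Am a b p2"
proof -
  have "a * \<theta> (p1 + p2) + b * (\<theta> (p1 + p2)) ^ 2
      = (a * \<theta> p1 + b * (\<theta> p1) ^ 2) + (a * \<theta> p2 + b * (\<theta> p2) ^ 2)"
    by (simp add: \<theta>_add L_sq_add algebra_simps)
  thus ?thesis unfolding Am_def using assms by (simp add: ginv_add expr_in \<theta>_in)
qed

lemma Am_0: "Am a b 0 = 0" by (simp add: Am_def)

lemma Gr_dim: assumes "a \<in> Kset m" "b \<in> Kset m" shows "subspace_of_dim (k + m) k (Gr a b)"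
proof -
  define g where "g = (\<lambda>p. p + sh k (Am a b p))"
  have Gr: "Gr a b = g ` F2n k" unfolding Gr_def g_def ..
  have z: "(0::nat\<Rightarrow>bit) \<in> F2n k" by (simp add: F2n_def)
  have g0: "g 0 = 0" by (simp add: g_def Am_0)
  have gadd: "g (p + q) = g p + g q" if "p \<in> F2n k" "q \<in> F2n k" for p q
  proof -
    have "Am a b (p + q) = Am a b p + Am a b q" using that kF by (intro Am_add[OF assms]) auto
    hence "g (p + q) = (p + q) + (sh k (Am a b p) + sh k (Am a b q))" by (simp add: g_def sh_add)
    thus ?thesis by (simp add: g_def add_ac)
  qed
  have sub: "F2.subspace (Gr a b)"
    unfolding F2_subspace_iff
  proof (intro conjI ballI)
    show "0 \<in> Gr a b" unfolding Gr using z g0 by (intro image_eqI[of _ g 0]) simp_all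
  next
    fix x y assume "x \<in> Gr a b" "y \<in> Gr a b"
    then obtain p q where pq: "p \<in> F2n k" "q \<in> F2n k" "x = g p" "y = g q"
      unfolding Gr by blast
    have pq2: "p + q \<in> F2n k" using pq(1,2) F2n_subspace[of k] unfolding F2_subspace_iff by blast
    have "x + y = g (p + q)" using gadd[OF pq(1,2)] pq(3,4) by simp
    thus "x + y \<in> Gr a b" unfolding Gr using pq2 by (intro image_eqI) 
  qed
  have inF: "Gr a b \<subseteq> F2n (k + m)"
  proof
    fix y assume "y \<in> Gr a b"
    then obtain p where p: "p \<in> F2n k" "y = g p" unfolding Gr by blast
    have "Am a b p \<in> F2n m" using p(1) kF by (intro Am_in[OF assms]) auto
    thus "y \<in> F2n (k + m)" unfolding p(2) g_def by (rule sh_add_in[OF p(1)])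
  qed
  have inj: "inj_on g (F2n k)"
  proof (rule inj_onI)
    fix p q assume pq: "p \<in> F2n k" "q \<in> F2n k" "g p = g q"
    have "p = prP k (g p)" unfolding g_def by (rule prP_sh_add[OF pq(1), symmetric])
    also have "\<dots> = prP k (g q)" using pq(3) by simp
    also have "\<dots> = q" unfolding g_def by (rule prP_sh_add[OF pq(2)])
    finally show "p = q" .
  qed
  have "card (Gr a b) = card (F2n k)" unfolding Gr by (rule card_image[OF inj])
  hence "card (Gr a b) = 2 ^ k" using F2n_card by simp
  thus ?thesis using sub inF subspace_of_dim_card by blast
qed

lemma Gr_cover:
  assumes y: "y1 \<in> F2n (k + m)" "y2 \<in> F2n (k + m)"
    and p: "prP k y1 \<noteq> 0" "prP k y2 \<noteq> 0" "prP k y1 \<noteq> prP k y2"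
  shows "\<exists>a \<in> Kset m. \<exists>b \<in> Kset m. y1 \<in> Gr a b \<and> y2 \<in> Gr a b"
proof -
  define p1 p2 where "p1 = prP k y1" and "p2 = prP k y2"
  define w1 w2 where "w1 = unsh k y1" and "w2 = unsh k y2"
  have pF: "p1 \<in> F2n k" "p2 \<in> F2n k" unfolding p1_def p2_def by (rule prP_in)+
  have pm: "p1 \<in> F2n m" "p2 \<in> F2n m" using pF kF by auto
  have wF: "w1 \<in> F2n m" "w2 \<in> F2n m" unfolding w1_def w2_def using y by (auto intro: unsh_in)
  define g1 g2 where "g1 = \<theta> p1" and "g2 = \<theta> p2"
  have z: "0 \<in> F2n m" by (simp add: F2n_def)
  have p0: "p1 \<noteq> 0" "p2 \<noteq> 0" "p1 \<noteq> p2" using p unfolding p1_def p2_def by auto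
  have g0: "g1 \<noteq> 0" "g2 \<noteq> 0" "g1 \<noteq> g2"
  proof -
    show "g1 \<noteq> 0"
    proof
      assume "g1 = 0" hence "\<theta> p1 = \<theta> 0" by (simp add: g1_def)
      hence "p1 = 0" using inj_onD[OF \<theta>_inj _ pm(1) z] by blast
      with p0 show False by simp
    qed
    show "g2 \<noteq> 0"
    proof
      assume "g2 = 0" hence "\<theta> p2 = \<theta> 0" by (simp add: g2_def)
      hence "p2 = 0" using inj_onD[OF \<theta>_inj _ pm(2) z] by blast
      with p0 show False by simp
    qed
    show "g1 \<noteq> g2"
    proof
      assume "g1 = g2" hence "\<theta> p1 = \<theta> p2" by (simp add: g1_def g2_def)
      hence "p1 = p2" using inj_onD[OF \<theta>_inj _ pm(1) pm(2)] by blast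
      with p0 show False by simp
    qed
  qed
  define \<Phi> where "\<Phi> = (\<lambda>(a, b). (a * g1 + b * g1 ^ 2, a * g2 + b * g2 ^ 2))"
  have gK: "g1 \<in> Kset m" "g2 \<in> Kset m" unfolding g1_def g2_def using pm by (auto intro: \<theta>_in)
  have finK: "finite (Kset m)" using card_K km k2 by auto
  have inj: "inj_on \<Phi> (Kset m \<times> Kset m)"
  proof (rule inj_onI)
    fix u v assume "u \<in> Kset m \<times> Kset m" "v \<in> Kset m \<times> Kset m" and e: "\<Phi> u = \<Phi> v"
    obtain a b where u: "u = (a, b)" by (cases u)
    obtain a' b' where v: "v = (a', b')" by (cases v)
    have e1: "a * g1 + b * g1 ^ 2 = a' * g1 + b' * g1 ^ 2" using e unfolding u v \<Phi>_def by simp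
    have e2: "a * g2 + b * g2 ^ 2 = a' * g2 + b' * g2 ^ 2" using e unfolding u v \<Phi>_def by simp
    show "u = v" using L_inj2[OF g0 e1 e2] u v by simp
  qed
  have sub: "\<Phi> ` (Kset m \<times> Kset m) \<subseteq> Kset m \<times> Kset m"
  proof
    fix z assume "z \<in> \<Phi> ` (Kset m \<times> Kset m)"
    then obtain a b where ab: "a \<in> Kset m" "b \<in> Kset m" "z = \<Phi> (a, b)" by blast
    show "z \<in> Kset m \<times> Kset m" unfolding ab(3) \<Phi>_def using expr_in[OF ab(1,2)] gK by simp
  qed
  have "card (\<Phi> ` (Kset m \<times> Kset m)) = card (Kset m \<times> Kset m)" using card_image[OF inj] .
  hence eq: "\<Phi> ` (Kset m \<times> Kset m) = Kset m \<times> Kset m"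
    using card_subset_eq[OF _ sub] finK by (simp add: finite_cartesian_product)
  have "(\<theta> w1, \<theta> w2) \<in> Kset m \<times> Kset m" using wF \<theta>_in by auto
  hence "(\<theta> w1, \<theta> w2) \<in> \<Phi> ` (Kset m \<times> Kset m)" by (subst eq)
  then obtain ab' where ab': "ab' \<in> Kset m \<times> Kset m" "(\<theta> w1, \<theta> w2) = \<Phi> ab'" by (rule imageE)
  obtain a b where "ab' = (a, b)" by (cases ab')
  with ab' have ab: "a \<in> Kset m" "b \<in> Kset m" "\<Phi> (a, b) = (\<theta> w1, \<theta> w2)" by auto
  have A1: "Am a b p1 = w1" unfolding Am_def using ab(3) wF by (simp add: \<Phi>_def g1_def ginv_\<theta>)
  have A2: "Am a b p2 = w2" unfolding Am_def using ab(3) wF by (simp add: \<Phi>_def g2_def ginv_\<theta>)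
  have "y1 = p1 + sh k w1" unfolding p1_def w1_def by (rule decomp)
  hence "y1 = p1 + sh k (Am a b p1)" by (simp only: A1)
  hence "y1 \<in> Gr a b" unfolding Gr_def using pF by blast
  moreover have "y2 = p2 + sh k w2" unfolding p2_def w2_def by (rule decomp)
  hence "y2 = p2 + sh k (Am a b p2)" by (simp only: A2)
  hence "y2 \<in> Gr a b" unfolding Gr_def using pF by blast
  ultimately show ?thesis using ab by blast
qed

end

lemma quad_in: "F2.subspace V \<Longrightarrow> y1 \<in> V \<Longrightarrow> y2 \<in> V \<Longrightarrow> {0, y1, y2, y1 + y2} \<subseteq> V"
  unfolding F2_subspace_iff by auto

theorem mainTheorem10:
  fixes n k c :: nat and S :: "(nat \<Rightarrow> bit) set set" and U :: "(nat \<Rightarrow> bit) set"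
  assumes "2 \<le> k" and "2 * k \<le> n"
    and "is_q_covering (n - k + 1) k 2 S"
    and "subspace_of_dim (n - k + 1) (n - k) U"
    and "c = card {X \<in> S. X \<subseteq> U}"
  shows "int (q_covering_number n k 2)
           \<le> 2 ^ (2 * (n - k)) + (2 ^ k - 1) * int (card S) - (2 ^ k - 2) * int c"
proof -
  define m where "m = n - k"
  have n_eq: "n = k + m" and km: "k \<le> m" and k2: "2 \<le> k" using assms(1,2) by (auto simp: m_def)
  have m1: "m \<ge> 1" using km k2 by simp
  have Sm: "n - k + 1 = Suc m" by (simp add: m_def)
  have Scov: "is_q_covering (Suc m) k 2 S" using assms(3) Sm by simp
  have finS: "finite S" using Scov by (simp add: is_q_covering_def)
  have Sdim: "\<And>V. V \<in> S \<Longrightarrow> subspace_of_dim (Suc m) k V" using Scov by (simp add: is_q_covering_def)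
  have Scover: "\<And>Y. subspace_of_dim (Suc m) 2 Y \<Longrightarrow> \<exists>V\<in>S. Y \<subseteq> V"
    using Scov by (simp add: is_q_covering_def)
  have Ud: "subspace_of_dim (Suc m) m U" using assms(4) Sm by (simp add: m_def)
  have U_sub: "F2.subspace U" and U_in: "U \<subseteq> F2n (Suc m)" and U_card: "card U = 2 ^ m"
    using Ud subspace_of_dim_card by auto
  have U_dim: "F2.dim U = m" using Ud by (simp add: subspace_of_dim_def)
  have finU: "finite U" using U_in finite_subset F2n_finite by blast
  obtain u0 where u0: "u0 \<in> F2n (Suc m)" "u0 \<notin> U"
  proof -
    have "\<not> F2n (Suc m) \<subseteq> U"
    proof
      assume "F2n (Suc m) \<subseteq> U"
      hence "card (F2n (Suc m)) \<le> card U" by (rule card_mono[OF finU])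
      thus False using F2n_card[of "Suc m"] U_card by simp
    qed
    thus ?thesis using that by blast
  qed
  have "\<exists>f. Vector_Spaces.linear scaleF scaleF f \<and> f ` U = F2n m \<and> inj_on f U"
    by (rule PFF.fin_subspace_iso[OF U_sub F2n_subspace finU F2n_finite]) (simp only: U_dim dim_F2n)
  then obtain \<psi> where \<psi>: "Vector_Spaces.linear scaleF scaleF \<psi>" "\<psi> ` U = F2n m" "inj_on \<psi> U"
    by blast
  have finK: "finite (Kset m)" and cardK: "card (Kset m) = 2 ^ m" using card_K[OF m1] by auto
  have "\<exists>f. Vector_Spaces.linear scaleF scaleL f \<and> f ` F2n m = Kset m \<and> inj_on f (F2n m)"
    by (rule PFL.fin_subspace_iso[OF F2n_subspace K_subspace F2n_finite finK]) (simp only: dim_F2n dim_K[OF m1])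
  then obtain \<theta> where \<theta>: "Vector_Spaces.linear scaleF scaleL \<theta>" "\<theta> ` F2n m = Kset m" "inj_on \<theta> (F2n m)"
    by blast
  interpret constr k m U u0 \<psi> \<theta>
    by (rule constr.intro) (fact k2 km U_sub U_in U_card u0(1) u0(2) \<psi>(1) \<psi>(2) \<psi>(3) \<theta>(1) \<theta>(2) \<theta>(3))+

  define C1 where "C1 = (\<lambda>(a, b). Gr a b) ` (Kset m \<times> Kset m)"
  define P0 where "P0 = F2n k - {0}"
  define C2 where "C2 = (\<Union>p\<in>P0. (\<lambda>V. Tm p ` V) ` S)"
  define C where "C = C1 \<union> C2"
  have finP0: "finite P0" unfolding P0_def by simp
  have finC1: "finite C1" unfolding C1_def using finK by simp
  have finC2: "finite C2" unfolding C2_def using finP0 finS by simp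

  have C1dim: "subspace_of_dim n k V" if "V \<in> C1" for V
  proof -
    from that obtain a b where "a \<in> Kset m" "b \<in> Kset m" "V = Gr a b" unfolding C1_def by auto
    thus ?thesis using Gr_dim n_eq by simp
  qed
  have C2dim: "subspace_of_dim n k V" if "V \<in> C2" for V
  proof -
    from that obtain p V' where "p \<in> P0" "V' \<in> S" "V = Tm p ` V'" unfolding C2_def by auto
    thus ?thesis using Tm_image_dim[of p V'] Sdim n_eq unfolding P0_def by simp
  qed

  have cover: "\<exists>V\<in>C. Y \<subseteq> V" if Y: "subspace_of_dim n 2 Y" for Y
  proof -
    have Ys: "F2.subspace Y" "Y \<subseteq> F2n (k + m)" "card Y = 4"
      using Y subspace_of_dim_card n_eq by auto
    have finY: "finite Y" using Ys(2) finite_subset F2n_finite by blast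
    obtain y1 y2 where yy: "y1 \<in> Y" "y2 \<in> Y" "y1 \<noteq> 0" "y2 \<noteq> 0" "y1 \<noteq> y2"
      and Yeq: "Y = {0, y1, y2, y1 + y2}"
      using two_dim[OF Ys(1) finY Ys(3)] by blast
    have yF: "y1 \<in> F2n (k + m)" "y2 \<in> F2n (k + m)" using yy Ys(2) by auto
    show ?thesis
    proof (cases "prP k y1 \<noteq> 0 \<and> prP k y2 \<noteq> 0 \<and> prP k y1 \<noteq> prP k y2")
      case True
      then obtain a b where ab: "a \<in> Kset m" "b \<in> Kset m" "y1 \<in> Gr a b" "y2 \<in> Gr a b"
        using Gr_cover[OF yF] by blast
      have "Gr a b \<in> C" unfolding C_def C1_def using ab(1,2) by blast
      moreover have "Y \<subseteq> Gr a b" unfolding Yeq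
        using quad_in[OF _ ab(3,4)] Gr_dim[OF ab(1,2)] by (simp add: subspace_of_dim_def)
      ultimately show ?thesis by blast
    next
      case False
      obtain p where p: "p \<in> F2n k" "p \<noteq> 0" "prP k y1 = 0 \<or> prP k y1 = p" "prP k y2 = 0 \<or> prP k y2 = p"
      proof (cases "prP k y1 \<noteq> 0")
        case True
        show ?thesis by (rule that[of "prP k y1"]) (use True False prP_in in auto)
      next
        case f1: False
        show ?thesis
        proof (cases "prP k y2 \<noteq> 0")
          case True
          show ?thesis by (rule that[of "prP k y2"]) (use True f1 prP_in in auto)
        next
          case False
          define d where "d = (\<lambda>i::nat. if i = 0 then (1::bit) else 0)"
          have "d \<in> F2n k" "d \<noteq> 0" using k2 by (auto simp: d_def F2n_def fun_eq_iff)
          show ?thesis by (rule that[of d]) (use \<open>d \<in> F2n k\<close> \<open>d \<noteq> 0\<close> f1 False in auto)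
        qed
      qed
      obtain x1 where x1: "x1 \<in> F2n (Suc m)" "Tm p x1 = y1" using Tm_surj[OF p(1) yF(1) p(3)] by blast
      obtain x2 where x2: "x2 \<in> F2n (Suc m)" "Tm p x2 = y2" using Tm_surj[OF p(1) yF(2) p(4)] by blast
      have x0: "x1 \<noteq> 0" "x2 \<noteq> 0" "x1 \<noteq> x2" using x1 x2 yy by auto
      define Z where "Z = {0, x1, x2, x1 + x2}"
      have Zs: "F2.subspace Z" unfolding Z_def by (rule quad_subspace)
      have Zin: "Z \<subseteq> F2n (Suc m)"
        unfolding Z_def using quad_in[OF F2n_subspace x1(1) x2(1)] .
      have Zc: "card Z = 2 ^ 2" unfolding Z_def using quad_card[OF x0] by simp
      have "subspace_of_dim (Suc m) 2 Z" using Zs Zin Zc subspace_of_dim_card by blast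
      then obtain V where V: "V \<in> S" "Z \<subseteq> V" using Scover by blast
      have TV: "subspace_of_dim (k + m) k (Tm p ` V)" using Tm_image_dim[OF p(1,2) Sdim[OF V(1)]] .
      have "Tm p ` V \<in> C" unfolding C_def C2_def P0_def using p(1,2) V(1) by blast
      moreover have "y1 \<in> Tm p ` V" "y2 \<in> Tm p ` V" using x1 x2 V(2) unfolding Z_def by auto
      hence "Y \<subseteq> Tm p ` V" unfolding Yeq
        using quad_in TV by (simp add: subspace_of_dim_def)
      ultimately show ?thesis by blast
    qed
  qed

  have isC: "is_q_covering n k 2 C"
    unfolding is_q_covering_def
  proof (intro conjI ballI allI impI)
    show "finite C" unfolding C_def using finC1 finC2 by simp
  next
    fix V assume "V \<in> C"
    thus "subspace_of_dim n k V" unfolding C_def using C1dim C2dim by blast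
  next
    fix Y assume "subspace_of_dim n 2 Y"
    thus "\<exists>V\<in>C. Y \<subseteq> V" by (rule cover)
  qed
  have qle: "q_covering_number n k 2 \<le> card C"
    unfolding q_covering_number_def using isC by (intro Least_le) blast

  define SU where "SU = {V \<in> S. V \<subseteq> U}"
  have cSU: "card SU = c" using assms(5) by (simp add: SU_def)
  have SUS: "SU \<subseteq> S" by (auto simp: SU_def)
  define C3 where "C3 = (\<lambda>V. (\<lambda>x. sh k (\<psi> x)) ` V) ` SU"
  define C4 where "C4 = (\<Union>p\<in>P0. (\<lambda>V. Tm p ` V) ` (S - SU))"
  have C2sub: "C2 \<subseteq> C3 \<union> C4"
  proof
    fix W assume "W \<in> C2"
    then obtain p V where pV: "p \<in> P0" "V \<in> S" "W = Tm p ` V" unfolding C2_def by blast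
    show "W \<in> C3 \<union> C4"
    proof (cases "V \<in> SU")
      case True
      hence "V \<subseteq> U" by (simp add: SU_def)
      hence "Tm p ` V = (\<lambda>x. sh k (\<psi> x)) ` V" using Tm_U by (intro image_cong) auto
      thus ?thesis using True pV(3) unfolding C3_def by blast
    next
      case False
      thus ?thesis using pV unfolding C4_def by blast
    qed
  qed
  have finSU: "finite SU" using finS SUS finite_subset by blast
  have cC3: "card C3 \<le> c" unfolding C3_def using card_image_le[OF finSU] cSU by simp
  have cC4: "card C4 \<le> card P0 * (card S - c)"
  proof -
    have "card C4 \<le> (\<Sum>p\<in>P0. card ((\<lambda>V. Tm p ` V) ` (S - SU)))"
      unfolding C4_def using finP0 by (rule card_UN_le)
    also have "\<dots> \<le> (\<Sum>p\<in>P0. card (S - SU))"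
      by (intro sum_mono card_image_le) (use finS in simp)
    also have "\<dots> = card P0 * (card S - c)"
      using card_Diff_subset[OF finSU SUS] cSU by simp
    finally show ?thesis .
  qed
  have cP0: "card P0 = 2 ^ k - 1"
    unfolding P0_def using F2n_card[of k] by (simp add: card_Diff_singleton F2n_def)
  have cC1: "card C1 \<le> 2 ^ m * 2 ^ m"
    unfolding C1_def using card_image_le[of "Kset m \<times> Kset m"] finK cardK
    by (simp add: card_cartesian_product)
  have finC3: "finite C3" unfolding C3_def using finSU by simp
  have finC4: "finite C4" unfolding C4_def using finP0 finS by simp
  have a1: "card C \<le> card C1 + card C2" unfolding C_def by (rule card_Un_le)
  have a2: "card C2 \<le> card (C3 \<union> C4)" using C2sub finC3 finC4 by (intro card_mono) auto
  have a3: "card (C3 \<union> C4) \<le> card C3 + card C4" by (rule card_Un_le)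
  have cC4': "card C4 \<le> (2 ^ k - 1) * (card S - c)" using cC4 cP0 by simp
  have cC: "card C \<le> 2 ^ m * 2 ^ m + (c + (2 ^ k - 1) * (card S - c))"
    using a1 a2 a3 cC1 cC3 cC4' by linarith
  have cS: "c \<le> card S" using card_mono[OF finS SUS] cSU by simp
  have k1: "(1::nat) \<le> 2 ^ k" by simp
  have "int (q_covering_number n k 2) \<le> int (2 ^ m * 2 ^ m + (c + (2 ^ k - 1) * (card S - c)))"
    using qle cC by linarith
  also have "\<dots> = 2 ^ (2 * m) + (2 ^ k - 1) * int (card S) - (2 ^ k - 2) * int c"
  proof -
    have i1: "int (2 ^ k - 1) = 2 ^ k - 1" using k1 by (simp add: of_nat_diff)
    have i2: "int (card S - c) = int (card S) - int c" using cS by (simp add: of_nat_diff)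
    have i3: "int (2 ^ m * 2 ^ m) = 2 ^ (2 * m)" by (simp add: power_add[symmetric] mult_2)
    have "int (2 ^ m * 2 ^ m + (c + (2 ^ k - 1) * (card S - c)))
        = int (2 ^ m * 2 ^ m) + (int c + int (2 ^ k - 1) * int (card S - c))" by simp
    also have "\<dots> = 2 ^ (2 * m) + (int c + (2 ^ k - 1) * (int (card S) - int c))"
      by (simp only: i1 i2 i3)
    also have "\<dots> = 2 ^ (2 * m) + (2 ^ k - 1) * int (card S) - (2 ^ k - 2) * int c"
      by (simp add: algebra_simps)
    finally show ?thesis .
  qed
  finally show ?thesis by (simp add: m_def)
qed

end
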